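(* Let $m,n\ge 1$ and let $L_{m,n}$ be the generalized Laplacian matrix of the complete bipartite graph $K_{m,n}$, i.e. $L_{m,n}=\begin{pmatrix} \mathrm{diag}(x_1,\dots,x_m) & -J_{m,n}\\ -J_{n,m} & \mathrm{diag}(y_1,\dots,y_n)\end{pmatrix}$, where $J_{p,q}$ is the all-ones $p\times q$ matrix. Then the $3$-minors of $L_{m,n}$, each taken with the sign making its leading coefficient positive, are the following polynomials, where $1\le i_1<i_2<i_3\le m$ and $1\le j_1<j_2<j_3\le n$: - $y_{j_1}$, $y_{j_1}y_{j_2}$ and $y_{j_1}y_{j_2}y_{j_3}$ when $n\ge 3$; - $x_{i_1}$, $x_{i_1}x_{i_2}$ and $x_{i_1}x_{i_2}x_{i_3}$ when $m\ge 3$; - $y_{j_1}y_{j_2}x_{i_1}-y_{j_1}-y_{j_2}$ when $n\ge 2$; - $x_{i_1}x_{i_2}y_{j_1}-x_{i_1}-x_{i_2}$ when $m\ge 2$; - $x_{i_1}+x_{i_2}$, $y_{j_1}+y_{j_2}$ and $x_{i_1}y_{j_1}$ when $m\ge 2$ and $n\ge 2$.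
   Context: A $3$-minor of a matrix is the determinant of a $3\times 3$ submatrix (choice of 3 rows and 3 columns). Here $x_1,\dots,x_m,y_1,\dots,y_n$ are indeterminates and the minors lie in $\mathbb{Z}[x_1,\dots,x_m,y_1,\dots,y_n]$. *)

theory Defs
  imports "HOL-Library.Poly_Mapping" "Jordan_Normal_Form.Determinant" "Jordan_Normal_Form.DL_Submatrix"
begin

text \<open>Indeterminates x_1..x_m (X i) and y_1..y_n (Y j), 1-based as in the paper.\<close>
datatype var = X nat | Y nat

type_synonym zpoly = "(var \<Rightarrow>\<^sub>0 nat) \<Rightarrow>\<^sub>0 int"

definition Var :: "var \<Rightarrow> zpoly" where
  "Var v = Poly_Mapping.single (Poly_Mapping.single v 1) 1"

text \<open>Generalized Laplacian of K_{m,n}; rows/columns 0..m-1 correspond to x_1..x_m,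
rows/columns m..m+n-1 to y_1..y_n.\<close>
definition laplacian_Kmn :: "nat \<Rightarrow> nat \<Rightarrow> zpoly mat" where
  "laplacian_Kmn m n = mat (m + n) (m + n) (\<lambda>(i, j).
     if i < m \<and> j < m then (if i = j then Var (X (i + 1)) else 0)
     else if m \<le> i \<and> m \<le> j then (if i = j then Var (Y (i - m + 1)) else 0)
     else - 1)"

definition three_minors :: "zpoly mat \<Rightarrow> zpoly set" where
  "three_minors A = {det (submatrix A I J) | I J.
      I \<subseteq> {..<dim_row A} \<and> J \<subseteq> {..<dim_col A} \<and> card I = 3 \<and> card J = 3}"

definition listed_minors :: "nat \<Rightarrow> nat \<Rightarrow> zpoly set" where
  "listed_minors m n =
     (if n \<ge> 3 then
        {Var (Y j1) | j1. 1 \<le> j1 \<and> j1 \<le> n}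
      \<union> {Var (Y j1) * Var (Y j2) | j1 j2. 1 \<le> j1 \<and> j1 < j2 \<and> j2 \<le> n}
      \<union> {Var (Y j1) * Var (Y j2) * Var (Y j3) | j1 j2 j3. 1 \<le> j1 \<and> j1 < j2 \<and> j2 < j3 \<and> j3 \<le> n}
      else {})
   \<union> (if m \<ge> 3 then
        {Var (X i1) | i1. 1 \<le> i1 \<and> i1 \<le> m}
      \<union> {Var (X i1) * Var (X i2) | i1 i2. 1 \<le> i1 \<and> i1 < i2 \<and> i2 \<le> m}
      \<union> {Var (X i1) * Var (X i2) * Var (X i3) | i1 i2 i3. 1 \<le> i1 \<and> i1 < i2 \<and> i2 < i3 \<and> i3 \<le> m}
      else {})
   \<union> (if n \<ge> 2 then
        {Var (Y j1) * Var (Y j2) * Var (X i1) - Var (Y j1) - Var (Y j2) | i1 j1 j2.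
           1 \<le> i1 \<and> i1 \<le> m \<and> 1 \<le> j1 \<and> j1 < j2 \<and> j2 \<le> n}
      else {})
   \<union> (if m \<ge> 2 then
        {Var (X i1) * Var (X i2) * Var (Y j1) - Var (X i1) - Var (X i2) | i1 i2 j1.
           1 \<le> i1 \<and> i1 < i2 \<and> i2 \<le> m \<and> 1 \<le> j1 \<and> j1 \<le> n}
      else {})
   \<union> (if m \<ge> 2 \<and> n \<ge> 2 then
        {Var (X i1) + Var (X i2) | i1 i2. 1 \<le> i1 \<and> i1 < i2 \<and> i2 \<le> m}
      \<union> {Var (Y j1) + Var (Y j2) | j1 j2. 1 \<le> j1 \<and> j1 < j2 \<and> j2 \<le> n}
      \<union> {Var (X i1) * Var (Y j1) | i1 j1. 1 \<le> i1 \<and> i1 \<le> m \<and> 1 \<le> j1 \<and> j1 \<le> n}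
      else {})"

end

theory Submission
  imports Defs
begin

lemma det1: "A \<in> carrier_mat 1 1 \<Longrightarrow> det A = A $$ (0,0)"
  by (simp add: det_def' [of _ 1] )
lemma det2: assumes A: "A \<in> carrier_mat 2 2" shows "det (A :: 'a::comm_ring_1 mat) = A $$ (0,0) * A $$ (1,1) - A $$ (1,0) * A $$ (0,1)"
proof -
  have "det A = (\<Sum>i<2. A $$ (i,0) * cofactor A i 0)" by (rule laplace_expansion_column[OF A], simp)
  also have "\<dots> = A $$ (0,0) * cofactor A 0 0 + A $$ (1,0) * cofactor A 1 0"
    by (simp add: numeral_2_eq_2)
  also have "cofactor A 0 0 = A $$ (1,1)" unfolding cofactor_def
    using A by (subst det1, auto simp: mat_delete_def insert_index_def)
  also have "cofactor A 1 0 = - A $$ (0,1)" unfolding cofactor_def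
    using A by (subst det1, auto simp: mat_delete_def insert_index_def)
  finally show ?thesis by simp
qed
lemma det3: assumes A: "A \<in> carrier_mat 3 3" shows "det (A :: 'a::comm_ring_1 mat) =
   A$$(0,0) * (A$$(1,1)*A$$(2,2) - A$$(2,1)*A$$(1,2))
   - A$$(1,0) * (A$$(0,1)*A$$(2,2) - A$$(2,1)*A$$(0,2)) + A$$(2,0) * (A$$(0,1)*A$$(1,2) - A$$(1,1)*A$$(0,2))"
proof -
  have "det A = (\<Sum>i<3. A $$ (i,0) * cofactor A i 0)" by (rule laplace_expansion_column[OF A], simp)
  also have "\<dots> = A $$ (0,0) * cofactor A 0 0 + A $$ (1,0) * cofactor A 1 0 + A $$ (2,0) * cofactor A 2 0"
    by (simp add: lessThan_nat_numeral)
  also have "cofactor A 0 0 = A$$(1,1)*A$$(2,2) - A$$(2,1)*A$$(1,2)" unfolding cofactor_def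
    using A by (subst det2, auto simp: mat_delete_def insert_index_def numeral_2_eq_2)
  also have "cofactor A 1 0 = - (A$$(0,1)*A$$(2,2) - A$$(2,1)*A$$(0,2))" unfolding cofactor_def
    using A by (subst det2, auto simp: mat_delete_def insert_index_def numeral_2_eq_2)
  also have "cofactor A 2 0 = A$$(0,1)*A$$(1,2) - A$$(1,1)*A$$(0,2)" unfolding cofactor_def
    using A by (subst det2, auto simp: mat_delete_def insert_index_def numeral_2_eq_2)
  finally show ?thesis by (simp add: algebra_simps)
qed


definition SS :: "nat \<Rightarrow> nat \<Rightarrow> zpoly set" where
 "SS m n = listed_minors m n \<union> uminus ` listed_minors m n"

lemma S_neg: "d \<in> SS m n \<Longrightarrow> - d \<in> SS m n"
  unfolding SS_def by (auto simp: image_iff)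
lemma S_I: "d \<in> listed_minors m n \<Longrightarrow> d \<in> SS m n" unfolding SS_def by blast

lemma L_y: "3 \<le> n \<Longrightarrow> {Var (Y j1) | j1. 1 \<le> j1 \<and> j1 \<le> n} \<subseteq> listed_minors m n"
  unfolding listed_minors_def by (simp only: if_True simp_thms) blast
lemma L_yy: "3 \<le> n \<Longrightarrow> {Var (Y j1) * Var (Y j2) | j1 j2. 1 \<le> j1 \<and> j1 < j2 \<and> j2 \<le> n} \<subseteq> listed_minors m n"
  unfolding listed_minors_def by (simp only: if_True simp_thms) blast
lemma L_yyy: "3 \<le> n \<Longrightarrow> {Var (Y j1) * Var (Y j2) * Var (Y j3) | j1 j2 j3. 1 \<le> j1 \<and> j1 < j2 \<and> j2 < j3 \<and> j3 \<le> n} \<subseteq> listed_minors m n"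
  unfolding listed_minors_def by (simp only: if_True simp_thms) blast
lemma L_x: "3 \<le> m \<Longrightarrow> {Var (X i1) | i1. 1 \<le> i1 \<and> i1 \<le> m} \<subseteq> listed_minors m n"
  unfolding listed_minors_def by (simp only: if_True simp_thms) blast
lemma L_xx: "3 \<le> m \<Longrightarrow> {Var (X i1) * Var (X i2) | i1 i2. 1 \<le> i1 \<and> i1 < i2 \<and> i2 \<le> m} \<subseteq> listed_minors m n"
  unfolding listed_minors_def by (simp only: if_True simp_thms) blast
lemma L_xxx: "3 \<le> m \<Longrightarrow> {Var (X i1) * Var (X i2) * Var (X i3) | i1 i2 i3. 1 \<le> i1 \<and> i1 < i2 \<and> i2 < i3 \<and> i3 \<le> m} \<subseteq> listed_minors m n"
  unfolding listed_minors_def by (simp only: if_True simp_thms) blast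
lemma L_yyx: "2 \<le> n \<Longrightarrow> {Var (Y j1) * Var (Y j2) * Var (X i1) - Var (Y j1) - Var (Y j2) | i1 j1 j2.
           1 \<le> i1 \<and> i1 \<le> m \<and> 1 \<le> j1 \<and> j1 < j2 \<and> j2 \<le> n} \<subseteq> listed_minors m n"
  unfolding listed_minors_def by (simp only: if_True simp_thms) blast
lemma L_xxy: "2 \<le> m \<Longrightarrow> {Var (X i1) * Var (X i2) * Var (Y j1) - Var (X i1) - Var (X i2) | i1 i2 j1.
           1 \<le> i1 \<and> i1 < i2 \<and> i2 \<le> m \<and> 1 \<le> j1 \<and> j1 \<le> n} \<subseteq> listed_minors m n"
  unfolding listed_minors_def by (simp only: if_True simp_thms) blast
lemma L_xpx: "2 \<le> m \<Longrightarrow> 2 \<le> n \<Longrightarrow> {Var (X i1) + Var (X i2) | i1 i2. 1 \<le> i1 \<and> i1 < i2 \<and> i2 \<le> m} \<subseteq> listed_minors m n"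
  unfolding listed_minors_def by (simp only: if_True simp_thms) blast
lemma L_ypy: "2 \<le> m \<Longrightarrow> 2 \<le> n \<Longrightarrow> {Var (Y j1) + Var (Y j2) | j1 j2. 1 \<le> j1 \<and> j1 < j2 \<and> j2 \<le> n} \<subseteq> listed_minors m n"
  unfolding listed_minors_def by (simp only: if_True simp_thms) blast
lemma L_xy: "2 \<le> m \<Longrightarrow> 2 \<le> n \<Longrightarrow> {Var (X i1) * Var (Y j1) | i1 j1. 1 \<le> i1 \<and> i1 \<le> m \<and> 1 \<le> j1 \<and> j1 \<le> n} \<subseteq> listed_minors m n"
  unfolding listed_minors_def by (simp only: if_True simp_thms) blast

lemma S_x: "a < m \<Longrightarrow> 3 \<le> m \<Longrightarrow> Var (X (Suc a)) \<in> SS m n"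
  by (rule S_I, rule subsetD[OF L_x], assumption, rule CollectI, rule exI[of _ "Suc a"], simp)
lemma S_y: "a < n \<Longrightarrow> 3 \<le> n \<Longrightarrow> Var (Y (Suc a)) \<in> SS m n"
  by (rule S_I, rule subsetD[OF L_y], assumption, rule CollectI, rule exI[of _ "Suc a"], simp)

lemma S_xx0: "a < b \<Longrightarrow> b < m \<Longrightarrow> 3 \<le> m \<Longrightarrow> Var (X (Suc a)) * Var (X (Suc b)) \<in> SS m n"
  by (rule S_I, rule subsetD[OF L_xx], assumption, rule CollectI, rule exI[of _ "Suc a"], rule exI[of _ "Suc b"], simp)
lemma S_xx: "a < m \<Longrightarrow> b < m \<Longrightarrow> a \<noteq> b \<Longrightarrow> 3 \<le> m \<Longrightarrow> Var (X (Suc a)) * Var (X (Suc b)) \<in> SS m n"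
  using S_xx0[of a b m n] S_xx0[of b a m n] by (simp add: ac_simps) linarith
lemma S_yy0: "a < b \<Longrightarrow> b < n \<Longrightarrow> 3 \<le> n \<Longrightarrow> Var (Y (Suc a)) * Var (Y (Suc b)) \<in> SS m n"
  by (rule S_I, rule subsetD[OF L_yy], assumption, rule CollectI, rule exI[of _ "Suc a"], rule exI[of _ "Suc b"], simp)
lemma S_yy: "a < n \<Longrightarrow> b < n \<Longrightarrow> a \<noteq> b \<Longrightarrow> 3 \<le> n \<Longrightarrow> Var (Y (Suc a)) * Var (Y (Suc b)) \<in> SS m n"
  using S_yy0[of a b n m] S_yy0[of b a n m] by (simp add: ac_simps) linarith

lemma S_xxx0: "a < b \<Longrightarrow> b < c \<Longrightarrow> c < m \<Longrightarrow> Var (X (Suc a)) * (Var (X (Suc b)) * Var (X (Suc c))) \<in> SS m n"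
  by (rule S_I, rule subsetD[OF L_xxx], simp, rule CollectI, rule exI[of _ "Suc a"], rule exI[of _ "Suc b"], rule exI[of _ "Suc c"], simp add: mult.assoc)
lemma S_xxx: "a < m \<Longrightarrow> b < m \<Longrightarrow> c < m \<Longrightarrow> a \<noteq> b \<Longrightarrow> a \<noteq> c \<Longrightarrow> b \<noteq> c \<Longrightarrow> Var (X (Suc a)) * (Var (X (Suc b)) * Var (X (Suc c))) \<in> SS m n"
  using S_xxx0[of a b c m n] S_xxx0[of a c b m n] S_xxx0[of b a c m n] S_xxx0[of b c a m n] S_xxx0[of c a b m n] S_xxx0[of c b a m n]
  by (simp add: ac_simps) linarith
lemma S_yyy0: "a < b \<Longrightarrow> b < c \<Longrightarrow> c < n \<Longrightarrow> Var (Y (Suc a)) * (Var (Y (Suc b)) * Var (Y (Suc c))) \<in> SS m n"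
  by (rule S_I, rule subsetD[OF L_yyy], simp, rule CollectI, rule exI[of _ "Suc a"], rule exI[of _ "Suc b"], rule exI[of _ "Suc c"], simp add: mult.assoc)
lemma S_yyy: "a < n \<Longrightarrow> b < n \<Longrightarrow> c < n \<Longrightarrow> a \<noteq> b \<Longrightarrow> a \<noteq> c \<Longrightarrow> b \<noteq> c \<Longrightarrow> Var (Y (Suc a)) * (Var (Y (Suc b)) * Var (Y (Suc c))) \<in> SS m n"
  using S_yyy0[of a b c n m] S_yyy0[of a c b n m] S_yyy0[of b a c n m] S_yyy0[of b c a n m] S_yyy0[of c a b n m] S_yyy0[of c b a n m]
  by (simp add: ac_simps) linarith

lemma S_xxy0: "a < b \<Longrightarrow> b < m \<Longrightarrow> c < n \<Longrightarrow> Var (X (Suc a)) * (Var (X (Suc b)) * Var (Y (Suc c))) - Var (X (Suc a)) - Var (X (Suc b)) \<in> SS m n"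
  by (rule S_I, rule subsetD[OF L_xxy], simp, rule CollectI, rule exI[of _ "Suc a"], rule exI[of _ "Suc b"], rule exI[of _ "Suc c"], simp add: mult.assoc)
lemma S_xxy: "a < m \<Longrightarrow> b < m \<Longrightarrow> a \<noteq> b \<Longrightarrow> c < n \<Longrightarrow> Var (X (Suc a)) * (Var (X (Suc b)) * Var (Y (Suc c))) - Var (X (Suc a)) - Var (X (Suc b)) \<in> SS m n"
  apply (cases "a < b")
   apply (simp add: S_xxy0)
  using S_xxy0[of b a m c n] by (simp add: algebra_simps)
lemma S_yyx0: "a < b \<Longrightarrow> b < n \<Longrightarrow> c < m \<Longrightarrow> Var (Y (Suc a)) * (Var (Y (Suc b)) * Var (X (Suc c))) - Var (Y (Suc a)) - Var (Y (Suc b)) \<in> SS m n"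
  by (rule S_I, rule subsetD[OF L_yyx], simp, rule CollectI, rule exI[of _ "Suc c"], rule exI[of _ "Suc a"], rule exI[of _ "Suc b"], simp add: mult.assoc)
lemma S_yyx: "a < n \<Longrightarrow> b < n \<Longrightarrow> a \<noteq> b \<Longrightarrow> c < m \<Longrightarrow> Var (Y (Suc a)) * (Var (Y (Suc b)) * Var (X (Suc c))) - Var (Y (Suc a)) - Var (Y (Suc b)) \<in> SS m n"
  apply (cases "a < b")
   apply (simp add: S_yyx0)
  using S_yyx0[of b a n c m] by (simp add: algebra_simps)

lemma S_xpx0: "a < b \<Longrightarrow> b < m \<Longrightarrow> 2 \<le> n \<Longrightarrow> Var (X (Suc a)) + Var (X (Suc b)) \<in> SS m n"
  by (rule S_I, rule subsetD[OF L_xpx], simp, simp, rule CollectI, rule exI[of _ "Suc a"], rule exI[of _ "Suc b"], simp)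
lemma S_xpx: "a < m \<Longrightarrow> b < m \<Longrightarrow> a \<noteq> b \<Longrightarrow> 2 \<le> n \<Longrightarrow> Var (X (Suc a)) + Var (X (Suc b)) \<in> SS m n"
  using S_xpx0[of a b m n] S_xpx0[of b a m n] by (simp add: ac_simps) linarith
lemma S_ypy0: "a < b \<Longrightarrow> b < n \<Longrightarrow> 2 \<le> m \<Longrightarrow> Var (Y (Suc a)) + Var (Y (Suc b)) \<in> SS m n"
  by (rule S_I, rule subsetD[OF L_ypy], simp, simp, rule CollectI, rule exI[of _ "Suc a"], rule exI[of _ "Suc b"], simp)
lemma S_ypy: "a < n \<Longrightarrow> b < n \<Longrightarrow> a \<noteq> b \<Longrightarrow> 2 \<le> m \<Longrightarrow> Var (Y (Suc a)) + Var (Y (Suc b)) \<in> SS m n"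
  using S_ypy0[of a b n m] S_ypy0[of b a n m] by (simp add: ac_simps) linarith
lemma S_xpx': "a < m \<Longrightarrow> b < m \<Longrightarrow> a \<noteq> b \<Longrightarrow> 2 \<le> n \<Longrightarrow> - Var (X (Suc a)) - Var (X (Suc b)) \<in> SS m n"
  using S_neg[OF S_xpx] by (simp add: algebra_simps)
lemma S_ypy': "a < n \<Longrightarrow> b < n \<Longrightarrow> a \<noteq> b \<Longrightarrow> 2 \<le> m \<Longrightarrow> - Var (Y (Suc a)) - Var (Y (Suc b)) \<in> SS m n"
  using S_neg[OF S_ypy] by (simp add: algebra_simps)

lemma S_xy: "a < m \<Longrightarrow> b < n \<Longrightarrow> 2 \<le> m \<Longrightarrow> 2 \<le> n \<Longrightarrow> Var (X (Suc a)) * Var (Y (Suc b)) \<in> SS m n"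
  by (rule S_I, rule subsetD[OF L_xy], simp, simp, rule CollectI, rule exI[of _ "Suc a"], rule exI[of _ "Suc b"], simp)
lemma S_yx: "a < m \<Longrightarrow> b < n \<Longrightarrow> 2 \<le> m \<Longrightarrow> 2 \<le> n \<Longrightarrow> Var (Y (Suc b)) * Var (X (Suc a)) \<in> SS m n"
  using S_xy by (simp add: mult.commute)


lemma S_xyy: "a < n \<Longrightarrow> b < n \<Longrightarrow> a \<noteq> b \<Longrightarrow> c < m \<Longrightarrow> Var (X (Suc c)) * (Var (Y (Suc a)) * Var (Y (Suc b))) - Var (Y (Suc b)) - Var (Y (Suc a)) \<in> SS m n"
  using S_yyx[of a n b c m] by (simp add: algebra_simps)
lemma S_xyy': "a < n \<Longrightarrow> b < n \<Longrightarrow> a \<noteq> b \<Longrightarrow> c < m \<Longrightarrow> Var (X (Suc c)) * (Var (Y (Suc a)) * Var (Y (Suc b))) - Var (Y (Suc a)) - Var (Y (Suc b)) \<in> SS m n"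
  using S_yyx[of a n b c m] by (simp add: algebra_simps)
lemma S_yxx: "a < m \<Longrightarrow> b < m \<Longrightarrow> a \<noteq> b \<Longrightarrow> c < n \<Longrightarrow> Var (Y (Suc c)) * (Var (X (Suc a)) * Var (X (Suc b))) - Var (X (Suc b)) - Var (X (Suc a)) \<in> SS m n"
  using S_xxy[of a m b c n] by (simp add: algebra_simps)
lemma S_yxx': "a < m \<Longrightarrow> b < m \<Longrightarrow> a \<noteq> b \<Longrightarrow> c < n \<Longrightarrow> Var (Y (Suc c)) * (Var (X (Suc a)) * Var (X (Suc b))) - Var (X (Suc a)) - Var (X (Suc b)) \<in> SS m n"
  using S_xxy[of a m b c n] by (simp add: algebra_simps)


definition ent :: "nat \<Rightarrow> nat \<Rightarrow> nat \<Rightarrow> zpoly" where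
 "ent m i j = (if i < m \<and> j < m then (if i = j then Var (X (i + 1)) else 0)
     else if m \<le> i \<and> m \<le> j then (if i = j then Var (Y (i - m + 1)) else 0)
     else - 1)"
definition D3 :: "(nat \<Rightarrow> nat \<Rightarrow> zpoly) \<Rightarrow> nat \<Rightarrow> nat \<Rightarrow> nat \<Rightarrow> nat \<Rightarrow> nat \<Rightarrow> nat \<Rightarrow> zpoly" where
 "D3 f r0 r1 r2 c0 c1 c2 = f r0 c0 * (f r1 c1 * f r2 c2 - f r2 c1 * f r1 c2)
   - f r1 c0 * (f r0 c1 * f r2 c2 - f r2 c1 * f r0 c2) + f r2 c0 * (f r0 c1 * f r1 c2 - f r1 c1 * f r0 c2)"
lemmas Srules = S_neg S_x S_y S_xx S_yy S_xxx S_yyy S_xxy S_yyx S_xpx S_ypy S_xpx' S_ypy' S_xy S_yx S_xyy S_xyy' S_yxx S_yxx'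

lemma B00: "a < b \<Longrightarrow> b < c \<Longrightarrow> d < e \<Longrightarrow> e < f \<Longrightarrow> c < m + n \<Longrightarrow> f < m + n \<Longrightarrow> m \<le> a \<Longrightarrow> m \<le> d \<Longrightarrow> D3 (ent m) a b c d e f \<noteq> 0 \<longrightarrow> D3 (ent m) a b c d e f \<in> SS m n"
  apply (simp add: D3_def ent_def ring_distribs mult.assoc split: if_splits)
  apply (auto intro!: Srules)?
  done
lemma B01: "a < b \<Longrightarrow> b < c \<Longrightarrow> d < e \<Longrightarrow> e < f \<Longrightarrow> c < m + n \<Longrightarrow> f < m + n \<Longrightarrow> m \<le> a \<Longrightarrow> d < m \<Longrightarrow> m \<le> e \<Longrightarrow> D3 (ent m) a b c d e f \<noteq> 0 \<longrightarrow> D3 (ent m) a b c d e f \<in> SS m n"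
  apply (simp add: D3_def ent_def ring_distribs mult.assoc split: if_splits)
  apply (auto intro!: Srules)?
  done
lemma B02: "a < b \<Longrightarrow> b < c \<Longrightarrow> d < e \<Longrightarrow> e < f \<Longrightarrow> c < m + n \<Longrightarrow> f < m + n \<Longrightarrow> m \<le> a \<Longrightarrow> e < m \<Longrightarrow> m \<le> f \<Longrightarrow> D3 (ent m) a b c d e f \<noteq> 0 \<longrightarrow> D3 (ent m) a b c d e f \<in> SS m n"
  apply (simp add: D3_def ent_def ring_distribs mult.assoc split: if_splits)
  apply (auto intro!: Srules)?
  done
lemma B03: "a < b \<Longrightarrow> b < c \<Longrightarrow> d < e \<Longrightarrow> e < f \<Longrightarrow> c < m + n \<Longrightarrow> f < m + n \<Longrightarrow> m \<le> a \<Longrightarrow> f < m \<Longrightarrow> D3 (ent m) a b c d e f \<noteq> 0 \<longrightarrow> D3 (ent m) a b c d e f \<in> SS m n"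
  apply (simp add: D3_def ent_def ring_distribs mult.assoc split: if_splits)
  apply (auto intro!: Srules)?
  done
lemma B10: "a < b \<Longrightarrow> b < c \<Longrightarrow> d < e \<Longrightarrow> e < f \<Longrightarrow> c < m + n \<Longrightarrow> f < m + n \<Longrightarrow> a < m \<Longrightarrow> m \<le> b \<Longrightarrow> m \<le> d \<Longrightarrow> D3 (ent m) a b c d e f \<noteq> 0 \<longrightarrow> D3 (ent m) a b c d e f \<in> SS m n"
  apply (simp add: D3_def ent_def ring_distribs mult.assoc split: if_splits)
  apply (auto intro!: Srules)?
  done
lemma B11: "a < b \<Longrightarrow> b < c \<Longrightarrow> d < e \<Longrightarrow> e < f \<Longrightarrow> c < m + n \<Longrightarrow> f < m + n \<Longrightarrow> a < m \<Longrightarrow> m \<le> b \<Longrightarrow> d < m \<Longrightarrow> m \<le> e \<Longrightarrow> D3 (ent m) a b c d e f \<noteq> 0 \<longrightarrow> D3 (ent m) a b c d e f \<in> SS m n"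
  apply (simp add: D3_def ent_def ring_distribs mult.assoc split: if_splits)
  apply (auto intro!: Srules)?
  done
lemma B12: "a < b \<Longrightarrow> b < c \<Longrightarrow> d < e \<Longrightarrow> e < f \<Longrightarrow> c < m + n \<Longrightarrow> f < m + n \<Longrightarrow> a < m \<Longrightarrow> m \<le> b \<Longrightarrow> e < m \<Longrightarrow> m \<le> f \<Longrightarrow> D3 (ent m) a b c d e f \<noteq> 0 \<longrightarrow> D3 (ent m) a b c d e f \<in> SS m n"
  apply (simp add: D3_def ent_def ring_distribs mult.assoc split: if_splits)
  apply (auto intro!: Srules)?
  done
lemma B13: "a < b \<Longrightarrow> b < c \<Longrightarrow> d < e \<Longrightarrow> e < f \<Longrightarrow> c < m + n \<Longrightarrow> f < m + n \<Longrightarrow> a < m \<Longrightarrow> m \<le> b \<Longrightarrow> f < m \<Longrightarrow> D3 (ent m) a b c d e f \<noteq> 0 \<longrightarrow> D3 (ent m) a b c d e f \<in> SS m n"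
  apply (simp add: D3_def ent_def ring_distribs mult.assoc split: if_splits)
  apply (auto intro!: Srules)?
  done
lemma B20: "a < b \<Longrightarrow> b < c \<Longrightarrow> d < e \<Longrightarrow> e < f \<Longrightarrow> c < m + n \<Longrightarrow> f < m + n \<Longrightarrow> b < m \<Longrightarrow> m \<le> c \<Longrightarrow> m \<le> d \<Longrightarrow> D3 (ent m) a b c d e f \<noteq> 0 \<longrightarrow> D3 (ent m) a b c d e f \<in> SS m n"
  apply (simp add: D3_def ent_def ring_distribs mult.assoc split: if_splits)
  apply (auto intro!: Srules)?
  done
lemma B21: "a < b \<Longrightarrow> b < c \<Longrightarrow> d < e \<Longrightarrow> e < f \<Longrightarrow> c < m + n \<Longrightarrow> f < m + n \<Longrightarrow> b < m \<Longrightarrow> m \<le> c \<Longrightarrow> d < m \<Longrightarrow> m \<le> e \<Longrightarrow> D3 (ent m) a b c d e f \<noteq> 0 \<longrightarrow> D3 (ent m) a b c d e f \<in> SS m n"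
  apply (simp add: D3_def ent_def ring_distribs mult.assoc split: if_splits)
  apply (auto intro!: Srules)?
  done
lemma B22: "a < b \<Longrightarrow> b < c \<Longrightarrow> d < e \<Longrightarrow> e < f \<Longrightarrow> c < m + n \<Longrightarrow> f < m + n \<Longrightarrow> b < m \<Longrightarrow> m \<le> c \<Longrightarrow> e < m \<Longrightarrow> m \<le> f \<Longrightarrow> D3 (ent m) a b c d e f \<noteq> 0 \<longrightarrow> D3 (ent m) a b c d e f \<in> SS m n"
  apply (simp add: D3_def ent_def ring_distribs mult.assoc split: if_splits)
  apply (auto intro!: Srules)?
  done
lemma B23: "a < b \<Longrightarrow> b < c \<Longrightarrow> d < e \<Longrightarrow> e < f \<Longrightarrow> c < m + n \<Longrightarrow> f < m + n \<Longrightarrow> b < m \<Longrightarrow> m \<le> c \<Longrightarrow> f < m \<Longrightarrow> D3 (ent m) a b c d e f \<noteq> 0 \<longrightarrow> D3 (ent m) a b c d e f \<in> SS m n"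
  apply (simp add: D3_def ent_def ring_distribs mult.assoc split: if_splits)
  apply (auto intro!: Srules)?
  done
lemma B30: "a < b \<Longrightarrow> b < c \<Longrightarrow> d < e \<Longrightarrow> e < f \<Longrightarrow> c < m + n \<Longrightarrow> f < m + n \<Longrightarrow> c < m \<Longrightarrow> m \<le> d \<Longrightarrow> D3 (ent m) a b c d e f \<noteq> 0 \<longrightarrow> D3 (ent m) a b c d e f \<in> SS m n"
  apply (simp add: D3_def ent_def ring_distribs mult.assoc split: if_splits)
  apply (auto intro!: Srules)?
  done
lemma B31: "a < b \<Longrightarrow> b < c \<Longrightarrow> d < e \<Longrightarrow> e < f \<Longrightarrow> c < m + n \<Longrightarrow> f < m + n \<Longrightarrow> c < m \<Longrightarrow> d < m \<Longrightarrow> m \<le> e \<Longrightarrow> D3 (ent m) a b c d e f \<noteq> 0 \<longrightarrow> D3 (ent m) a b c d e f \<in> SS m n"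
  apply (simp add: D3_def ent_def ring_distribs mult.assoc split: if_splits)
  apply (auto intro!: Srules)?
  done
lemma B32: "a < b \<Longrightarrow> b < c \<Longrightarrow> d < e \<Longrightarrow> e < f \<Longrightarrow> c < m + n \<Longrightarrow> f < m + n \<Longrightarrow> c < m \<Longrightarrow> e < m \<Longrightarrow> m \<le> f \<Longrightarrow> D3 (ent m) a b c d e f \<noteq> 0 \<longrightarrow> D3 (ent m) a b c d e f \<in> SS m n"
  apply (simp add: D3_def ent_def ring_distribs mult.assoc split: if_splits)
  apply (auto intro!: Srules)?
  done
lemma B33: "a < b \<Longrightarrow> b < c \<Longrightarrow> d < e \<Longrightarrow> e < f \<Longrightarrow> c < m + n \<Longrightarrow> f < m + n \<Longrightarrow> c < m \<Longrightarrow> f < m \<Longrightarrow> D3 (ent m) a b c d e f \<noteq> 0 \<longrightarrow> D3 (ent m) a b c d e f \<in> SS m n"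
  apply (simp add: D3_def ent_def ring_distribs mult.assoc split: if_splits)
  apply (auto intro!: Srules)?
  done

lemma core: assumes "a < b" "b < c" "c < m + n" "d < e" "e < f" "f < m + n" "D3 (ent m) a b c d e f \<noteq> 0"
  shows "D3 (ent m) a b c d e f \<in> SS m n"
proof -
  have rc: "c < m \<or> (b < m \<and> m \<le> c) \<or> (a < m \<and> m \<le> b) \<or> m \<le> a" by linarith
  have cc: "f < m \<or> (e < m \<and> m \<le> f) \<or> (d < m \<and> m \<le> e) \<or> m \<le> d" by linarith
  from rc cc assms show ?thesis by (meson B00 B01 B02 B03 B10 B11 B12 B13 B20 B21 B22 B23 B30 B31 B32 B33)
qed



lemma pick3: assumes "a < b" "b < c"
  shows "pick {a,b,c} 0 = a" "pick {a,b,c} (Suc 0) = b" "pick {a,b,c} (Suc (Suc 0)) = c"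
proof -
  show p0: "pick {a,b,c} 0 = a" using assms by (simp only: pick.simps, intro Least_equality) auto
  show p1: "pick {a,b,c} (Suc 0) = b" using assms by (simp only: pick.simps(2) p0, intro Least_equality) auto
  show "pick {a,b,c} (Suc (Suc 0)) = c" using assms unfolding pick.simps(2)[of _ "Suc 0"] p1 by (intro Least_equality) auto
qed

lemma lap_index: "i < m + n \<Longrightarrow> j < m + n \<Longrightarrow> laplacian_Kmn m n $$ (i, j) = ent m i j"
  unfolding laplacian_Kmn_def ent_def by simp

lemma det_sub: assumes "a < b" "b < c" "c < m + n" "d < e" "e < f" "f < m + n"
  shows "det (submatrix (laplacian_Kmn m n) {a,b,c} {d,e,f}) = D3 (ent m) a b c d e f"
proof -
  let ?L = "laplacian_Kmn m n"
  have c1: "card {i. i < dim_row ?L \<and> i \<in> {a,b,c}} = 3"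
  proof -
    have "{i. i < dim_row ?L \<and> i \<in> {a,b,c}} = {a,b,c}" using assms by (auto simp: laplacian_Kmn_def)
    thus ?thesis using assms by simp
  qed
  have c2: "card {i. i < dim_col ?L \<and> i \<in> {d,e,f}} = 3"
  proof -
    have "{i. i < dim_col ?L \<and> i \<in> {d,e,f}} = {d,e,f}" using assms by (auto simp: laplacian_Kmn_def)
    thus ?thesis using assms by simp
  qed
  have car: "submatrix ?L {a,b,c} {d,e,f} \<in> carrier_mat 3 3"
    unfolding carrier_mat_def mem_Collect_eq dim_submatrix c1 c2 by simp
  have idx: "submatrix ?L {a,b,c} {d,e,f} $$ (i,j) = ?L $$ (pick {a,b,c} i, pick {d,e,f} j)" if "i < 3" "j < 3" for i j
    by (rule submatrix_index, use c1 c2 that in auto)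
  have pr: "pick {a,b,c} i = [a,b,c]!i" "pick {d,e,f} i = [d,e,f]!i" if "i < 3" for i
    using that pick3[OF assms(1,2)] pick3[OF assms(4,5)] by (auto simp: less_Suc_eq numeral_3_eq_3)
  have bd: "[a,b,c]!i < m + n" "[d,e,f]!i < m + n" if "i < 3" for i
    using that assms by (auto simp: less_Suc_eq numeral_3_eq_3)
  have E: "submatrix ?L {a,b,c} {d,e,f} $$ (i,j) = ent m ([a,b,c]!i) ([d,e,f]!j)" if "i < 3" "j < 3" for i j
    using idx[OF that] pr[OF that(1)] pr[OF that(2)] lap_index[OF bd(1)[OF that(1)] bd(2)[OF that(2)]] by simp
  show ?thesis
    unfolding det3[OF car] D3_def by (simp add: E)
qed

lemma sort3: assumes "card (I::nat set) = 3" shows "\<exists>a b c. a < b \<and> b < c \<and> I = {a,b,c}"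
proof -
  obtain x y z where I: "I = {x,y,z}" "x \<noteq> y" "y \<noteq> z" "x \<noteq> z" using assms card_3_iff by metis
  have w: "\<exists>a b c. a < b \<and> b < c \<and> {x,y,z} = {a,b,c}" if "p < q" "q < r" "{x,y,z} = {p,q,r}" for p q r
    using that by blast
  from I(2-4) consider "x<y" "y<z" | "x<z" "z<y" | "y<x" "x<z" | "y<z" "z<x" | "z<x" "x<y" | "z<y" "y<x"
    by linarith
  then show ?thesis unfolding I(1)
    by cases (auto intro: w[of x y z] w[of x z y] w[of y x z] w[of y z x] w[of z x y] w[of z y x])
qed

lemma dimL: "dim_row (laplacian_Kmn m n) = m + n" "dim_col (laplacian_Kmn m n) = m + n"
  by (simp_all add: laplacian_Kmn_def)

lemma TM_char: "x \<in> three_minors (laplacian_Kmn m n) \<longleftrightarrow>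
  (\<exists>a b c d e f. a < b \<and> b < c \<and> c < m + n \<and> d < e \<and> e < f \<and> f < m + n \<and> x = D3 (ent m) a b c d e f)"
proof
  assume "x \<in> three_minors (laplacian_Kmn m n)"
  then obtain I J where IJ: "I \<subseteq> {..<m+n}" "J \<subseteq> {..<m+n}" "card I = 3" "card J = 3"
     "x = det (submatrix (laplacian_Kmn m n) I J)"
    unfolding three_minors_def dimL by blast
  obtain a b c where I: "a < b" "b < c" "I = {a,b,c}" using sort3[OF IJ(3)] by blast
  obtain d e f where J: "d < e" "e < f" "J = {d,e,f}" using sort3[OF IJ(4)] by blast
  have "c < m + n" "f < m + n" using IJ I J by auto
  then show "\<exists>a b c d e f. a < b \<and> b < c \<and> c < m + n \<and> d < e \<and> e < f \<and> f < m + n \<and> x = D3 (ent m) a b c d e f"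
    using det_sub[of a b c m n d e f] I J IJ by blast
next
  assume "\<exists>a b c d e f. a < b \<and> b < c \<and> c < m + n \<and> d < e \<and> e < f \<and> f < m + n \<and> x = D3 (ent m) a b c d e f"
  then obtain a b c d e f where h: "a < b" "b < c" "c < m + n" "d < e" "e < f" "f < m + n" "x = D3 (ent m) a b c d e f" by blast
  have fs: "{a,b,c} \<subseteq> {..<dim_row (laplacian_Kmn m n)}" "{d,e,f} \<subseteq> {..<dim_col (laplacian_Kmn m n)}"
    "card {a,b,c} = 3" "card {d,e,f} = 3" unfolding dimL using h by auto
  show "x \<in> three_minors (laplacian_Kmn m n)" unfolding three_minors_def
    apply (rule CollectI, rule exI[of _ "{a,b,c}"], rule exI[of _ "{d,e,f}"])
    using det_sub[OF h(1-6)] h(7) fs by simp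
qed




lemma lookup_Var: "Poly_Mapping.lookup (Var v) k = (if k = Poly_Mapping.single v 1 then 1 else 0)"
  unfolding Var_def lookup_single by (simp add: when_def)

lemma single_inj1: "v \<noteq> w \<Longrightarrow> Poly_Mapping.single v (1::nat) \<noteq> Poly_Mapping.single w 1"
  by (metis lookup_single_eq lookup_single_not_eq zero_neq_one)

lemma Var2: "Var u * Var v = Poly_Mapping.single (Poly_Mapping.single u 1 + Poly_Mapping.single v 1) 1"
  unfolding Var_def by (simp add: mult_single)
lemma Var3: "Var u * Var v * Var w = Poly_Mapping.single (Poly_Mapping.single u 1 + Poly_Mapping.single v 1 + Poly_Mapping.single w 1) 1"
  unfolding Var_def by (simp add: mult_single)

lemma single_nz: "Poly_Mapping.single k (1::int) \<noteq> 0"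
  by (metis lookup_single_eq lookup_zero zero_neq_one)

lemma NZ1: "Var v \<noteq> 0" unfolding Var_def by (rule single_nz)
lemma NZ2: "Var u * Var v \<noteq> 0" unfolding Var2 by (rule single_nz)
lemma NZ3: "Var u * Var v * Var w \<noteq> 0" unfolding Var3 by (rule single_nz)
lemma NZsum: assumes "v \<noteq> w" shows "Var v + Var w \<noteq> 0"
proof
  assume "Var v + Var w = 0"
  then have "Poly_Mapping.lookup (Var v + Var w) (Poly_Mapping.single v 1) = 0" by (simp add: lookup_zero)
  then show False using single_inj1[OF assms[symmetric]] by (simp add: lookup_add lookup_Var)
qed
lemma NZxxy: assumes "u \<noteq> v" "w \<noteq> u" shows "Var u * Var v * Var w - Var u - Var v \<noteq> 0"
proof
  let ?M = "Poly_Mapping.single u 1 + Poly_Mapping.single v 1 + Poly_Mapping.single w (1::nat)"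
  assume "Var u * Var v * Var w - Var u - Var v = 0"
  then have "Poly_Mapping.lookup (Var u * Var v * Var w - Var u - Var v) (Poly_Mapping.single u 1) = 0" by (simp add: lookup_zero)
  moreover have "?M \<noteq> Poly_Mapping.single u 1"
  proof
    assume "?M = Poly_Mapping.single u 1"
    then have "Poly_Mapping.lookup ?M v = Poly_Mapping.lookup (Poly_Mapping.single u 1) v" by simp
    then show False using assms by (simp add: lookup_add lookup_single when_def)
  qed
  ultimately show False using single_inj1[OF assms(1)[symmetric]]
    unfolding Var3 by (simp add: lookup_minus lookup_Var lookup_single when_def)
qed




definition Qm :: "nat \<Rightarrow> nat \<Rightarrow> zpoly \<Rightarrow> bool" where
  "Qm m n x = (x \<in> three_minors (laplacian_Kmn m n) \<or> - x \<in> three_minors (laplacian_Kmn m n))"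

lemma Q_neg: "Qm m n (- x) = Qm m n x" unfolding Qm_def by auto

lemma Q_sorted: "a < b \<Longrightarrow> b < c \<Longrightarrow> c < m + n \<Longrightarrow> d < e \<Longrightarrow> e < f \<Longrightarrow> f < m + n \<Longrightarrow> Qm m n (D3 (ent m) a b c d e f)"
  unfolding Qm_def TM_char by blast

lemma rs01: "D3 g b a c d e f = - D3 g a b c d e f" unfolding D3_def by (simp add: algebra_simps)
lemma rs12: "D3 g a c b d e f = - D3 g a b c d e f" unfolding D3_def by (simp add: algebra_simps)
lemma cs01: "D3 g a b c e d f = - D3 g a b c d e f" unfolding D3_def by (simp add: algebra_simps)
lemma cs12: "D3 g a b c d f e = - D3 g a b c d e f" unfolding D3_def by (simp add: algebra_simps)

lemma sym3: fixes P :: "nat \<Rightarrow> nat \<Rightarrow> nat \<Rightarrow> bool"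
  assumes s1: "\<And>a b c. P b a c = P a b c" and s2: "\<And>a b c. P a c b = P a b c"
    and srt: "\<And>a b c. a < b \<Longrightarrow> b < c \<Longrightarrow> c < N \<Longrightarrow> P a b c"
    and h: "a < N" "b < N" "c < N" "a \<noteq> b" "b \<noteq> c" "a \<noteq> c"
  shows "P a b c"
proof -
  from h(4-6) consider "a<b" "b<c" | "a<c" "c<b" | "b<a" "a<c" | "b<c" "c<a" | "c<a" "a<b" | "c<b" "b<a"
    by linarith
  then show ?thesis
  proof cases
    case 1 then show ?thesis using srt h by blast
  next
    case 2 then show ?thesis using srt[of a c b] h s2[of a b c] by blast
  next
    case 3 then show ?thesis using srt[of b a c] h s1[of a b c] by blast
  next
    case 4 then show ?thesis using srt[of b c a] h s1[of a b c] s2[of b a c] by blast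
  next
    case 5 then show ?thesis using srt[of c a b] h s2[of a b c] s1[of a c b] by blast
  next
    case 6 then show ?thesis using srt[of c b a] h s1[of b c a] s2[of b a c] s1[of a b c] by metis
  qed
qed

lemma Q_any: assumes "a < m + n" "b < m + n" "c < m + n" "a \<noteq> b" "b \<noteq> c" "a \<noteq> c"
  "d < m + n" "e < m + n" "f < m + n" "d \<noteq> e" "e \<noteq> f" "d \<noteq> f"
  shows "Qm m n (D3 (ent m) a b c d e f)"
proof -
  have cols: "Qm m n (D3 (ent m) a' b' c' d e f)" if "a' < b'" "b' < c'" "c' < m + n" for a' b' c'
  proof (rule sym3[where P = "\<lambda>d e f. Qm m n (D3 (ent m) a' b' c' d e f)" and N = "m + n"])
    show "\<And>x y z. Qm m n (D3 (ent m) a' b' c' y x z) = Qm m n (D3 (ent m) a' b' c' x y z)"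
      by (subst cs01, (rule Q_neg | rule Q_neg[symmetric]))
    show "\<And>x y z. Qm m n (D3 (ent m) a' b' c' x z y) = Qm m n (D3 (ent m) a' b' c' x y z)"
      by (subst cs12, (rule Q_neg | rule Q_neg[symmetric]))
    show "\<And>x y z. x < y \<Longrightarrow> y < z \<Longrightarrow> z < m + n \<Longrightarrow> Qm m n (D3 (ent m) a' b' c' x y z)"
      by (rule Q_sorted[OF that])
  qed (fact assms)+
  show ?thesis
  proof (rule sym3[where P = "\<lambda>a b c. Qm m n (D3 (ent m) a b c d e f)" and N = "m + n"])
    show "\<And>x y z. Qm m n (D3 (ent m) y x z d e f) = Qm m n (D3 (ent m) x y z d e f)"
      by (subst rs01, (rule Q_neg | rule Q_neg[symmetric]))
    show "\<And>x y z. Qm m n (D3 (ent m) x z y d e f) = Qm m n (D3 (ent m) x y z d e f)"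
      by (subst rs12, (rule Q_neg | rule Q_neg[symmetric]))
    show "\<And>x y z. x < y \<Longrightarrow> y < z \<Longrightarrow> z < m + n \<Longrightarrow> Qm m n (D3 (ent m) x y z d e f)"
      by (rule cols)
  qed (fact assms)+
qed

lemma Q_D: assumes "a < m + n" "b < m + n" "c < m + n" "a \<noteq> b" "b \<noteq> c" "a \<noteq> c"
  "d < m + n" "e < m + n" "f < m + n" "d \<noteq> e" "e \<noteq> f" "d \<noteq> f"
  and "D3 (ent m) a b c d e f = p \<or> D3 (ent m) a b c d e f = - p"
  shows "Qm m n p"
  using Q_any[OF assms(1-12)] assms(13) Q_neg by auto

lemma ex2: "2 \<le> (N::nat) \<Longrightarrow> \<exists>b<N. b \<noteq> a" by presburger
lemma ex3: "3 \<le> (N::nat) \<Longrightarrow> \<exists>b<N. b \<noteq> a \<and> b \<noteq> c" by presburger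





lemma F_y: assumes "j < n" "3 \<le> n" "1 \<le> m" shows "Qm m n (Var (Y (Suc j)))"
proof -
  obtain b where b: "b < n" "b \<noteq> j" using ex2[of n j] assms by auto
  obtain c where c: "c < n" "c \<noteq> j" "c \<noteq> b" using ex3[of n j b] assms by auto
  show ?thesis apply (rule Q_D[where a=0 and b="m+j" and c="m+b" and d=0 and e="m+j" and f="m+c"]) using assms b c apply (simp_all add: D3_def ent_def algebra_simps) done
qed
lemma F_yy: assumes "j < k" "k < n" "3 \<le> n" "1 \<le> m" shows "Qm m n (Var (Y (Suc j)) * Var (Y (Suc k)))"
proof -
  obtain c where c: "c < n" "c \<noteq> j" "c \<noteq> k" using ex3[of n j k] assms by auto
  show ?thesis apply (rule Q_D[where a=0 and b="m+j" and c="m+k" and d="m+j" and e="m+k" and f="m+c"]) using assms c apply (simp_all add: D3_def ent_def algebra_simps) done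
qed
lemma F_yyy: assumes "j < k" "k < l" "l < n" shows "Qm m n (Var (Y (Suc j)) * Var (Y (Suc k)) * Var (Y (Suc l)))"
  apply (rule Q_D[where a="m+j" and b="m+k" and c="m+l" and d="m+j" and e="m+k" and f="m+l"]) using assms apply (simp_all add: D3_def ent_def algebra_simps) done
lemma F_x: assumes "i < m" "3 \<le> m" "1 \<le> n" shows "Qm m n (Var (X (Suc i)))"
proof -
  obtain b where b: "b < m" "b \<noteq> i" using ex2[of m i] assms by auto
  obtain c where c: "c < m" "c \<noteq> i" "c \<noteq> b" using ex3[of m i b] assms by auto
  show ?thesis apply (rule Q_D[where a=m and b=i and c=b and d=m and e=i and f=c]) using assms b c apply (simp_all add: D3_def ent_def algebra_simps) done
qed
lemma F_xx: assumes "i < k" "k < m" "3 \<le> m" "1 \<le> n" shows "Qm m n (Var (X (Suc i)) * Var (X (Suc k)))"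
proof -
  obtain c where c: "c < m" "c \<noteq> i" "c \<noteq> k" using ex3[of m i k] assms by auto
  show ?thesis apply (rule Q_D[where a=m and b=i and c=k and d=i and e=k and f=c]) using assms c apply (simp_all add: D3_def ent_def algebra_simps) done
qed
lemma F_xxx: assumes "i < k" "k < l" "l < m" shows "Qm m n (Var (X (Suc i)) * Var (X (Suc k)) * Var (X (Suc l)))"
  apply (rule Q_D[where a=i and b=k and c=l and d=i and e=k and f=l]) using assms apply (simp_all add: D3_def ent_def algebra_simps) done
lemma F_yyx: assumes "i < m" "j < k" "k < n" shows "Qm m n (Var (Y (Suc j)) * Var (Y (Suc k)) * Var (X (Suc i)) - Var (Y (Suc j)) - Var (Y (Suc k)))"
  apply (rule Q_D[where a=i and b="m+j" and c="m+k" and d=i and e="m+j" and f="m+k"]) using assms apply (simp_all add: D3_def ent_def algebra_simps) done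
lemma F_xxy: assumes "i < k" "k < m" "j < n" shows "Qm m n (Var (X (Suc i)) * Var (X (Suc k)) * Var (Y (Suc j)) - Var (X (Suc i)) - Var (X (Suc k)))"
  apply (rule Q_D[where a=i and b=k and c="m+j" and d=i and e=k and f="m+j"]) using assms apply (simp_all add: D3_def ent_def algebra_simps) done
lemma F_xpx: assumes "i < k" "k < m" "2 \<le> n" shows "Qm m n (Var (X (Suc i)) + Var (X (Suc k)))"
  apply (rule Q_D[where a=i and b=k and c=m and d=i and e=k and f="m+1"]) using assms apply (simp_all add: D3_def ent_def algebra_simps) done
lemma F_ypy: assumes "j < k" "k < n" "2 \<le> m" shows "Qm m n (Var (Y (Suc j)) + Var (Y (Suc k)))"
  apply (rule Q_D[where a="m+j" and b="m+k" and c=0 and d="m+j" and e="m+k" and f=1]) using assms apply (simp_all add: D3_def ent_def algebra_simps) done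
lemma F_xy: assumes "i < m" "j < n" "2 \<le> m" "2 \<le> n" shows "Qm m n (Var (X (Suc i)) * Var (Y (Suc j)))"
proof -
  obtain b where b: "b < m" "b \<noteq> i" using ex2[of m i] assms by auto
  obtain l where l: "l < n" "l \<noteq> j" using ex2[of n j] assms by auto
  show ?thesis apply (rule Q_D[where a=i and b=b and c="m+j" and d=i and e="m+j" and f="m+l"]) using assms b l apply (simp_all add: D3_def ent_def algebra_simps) done
qed




lemma G_y: "1 \<le> j \<Longrightarrow> j \<le> n \<Longrightarrow> 3 \<le> n \<Longrightarrow> 1 \<le> m \<Longrightarrow> Qm m n (Var (Y j))"
  using F_y[of "j - 1" n m] by simp
lemma G_yy: "1 \<le> j \<Longrightarrow> j < k \<Longrightarrow> k \<le> n \<Longrightarrow> 3 \<le> n \<Longrightarrow> 1 \<le> m \<Longrightarrow> Qm m n (Var (Y j) * Var (Y k))"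
  using F_yy[of "j - 1" "k - 1" n m] by simp
lemma G_yyy: "1 \<le> j \<Longrightarrow> j < k \<Longrightarrow> k < l \<Longrightarrow> l \<le> n \<Longrightarrow> Qm m n (Var (Y j) * Var (Y k) * Var (Y l))"
  using F_yyy[of "j - 1" "k - 1" "l - 1" n m] by simp
lemma G_x: "1 \<le> j \<Longrightarrow> j \<le> m \<Longrightarrow> 3 \<le> m \<Longrightarrow> 1 \<le> n \<Longrightarrow> Qm m n (Var (X j))"
  using F_x[of "j - 1" m n] by simp
lemma G_xx: "1 \<le> j \<Longrightarrow> j < k \<Longrightarrow> k \<le> m \<Longrightarrow> 3 \<le> m \<Longrightarrow> 1 \<le> n \<Longrightarrow> Qm m n (Var (X j) * Var (X k))"
  using F_xx[of "j - 1" "k - 1" m n] by simp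
lemma G_xxx: "1 \<le> j \<Longrightarrow> j < k \<Longrightarrow> k < l \<Longrightarrow> l \<le> m \<Longrightarrow> Qm m n (Var (X j) * Var (X k) * Var (X l))"
  using F_xxx[of "j - 1" "k - 1" "l - 1" m n] by simp
lemma G_yyx: "1 \<le> i \<Longrightarrow> i \<le> m \<Longrightarrow> 1 \<le> j \<Longrightarrow> j < k \<Longrightarrow> k \<le> n \<Longrightarrow>
   Qm m n (Var (Y j) * Var (Y k) * Var (X i) - Var (Y j) - Var (Y k))"
  using F_yyx[of "i - 1" m "j - 1" "k - 1" n] by simp
lemma G_xxy: "1 \<le> i \<Longrightarrow> i < k \<Longrightarrow> k \<le> m \<Longrightarrow> 1 \<le> j \<Longrightarrow> j \<le> n \<Longrightarrow>
   Qm m n (Var (X i) * Var (X k) * Var (Y j) - Var (X i) - Var (X k))"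
  using F_xxy[of "i - 1" "k - 1" m "j - 1" n] by simp
lemma G_xpx: "1 \<le> i \<Longrightarrow> i < k \<Longrightarrow> k \<le> m \<Longrightarrow> 2 \<le> n \<Longrightarrow> Qm m n (Var (X i) + Var (X k))"
  using F_xpx[of "i - 1" "k - 1" m n] by simp
lemma G_ypy: "1 \<le> i \<Longrightarrow> i < k \<Longrightarrow> k \<le> n \<Longrightarrow> 2 \<le> m \<Longrightarrow> Qm m n (Var (Y i) + Var (Y k))"
  using F_ypy[of "i - 1" "k - 1" n m] by simp
lemma G_xy: "1 \<le> i \<Longrightarrow> i \<le> m \<Longrightarrow> 1 \<le> j \<Longrightarrow> j \<le> n \<Longrightarrow> 2 \<le> m \<Longrightarrow> 2 \<le> n \<Longrightarrow> Qm m n (Var (X i) * Var (Y j))"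
  using F_xy[of "i - 1" m "j - 1" n] by simp

definition good :: "nat \<Rightarrow> nat \<Rightarrow> zpoly \<Rightarrow> bool" where "good m n q = (q \<noteq> 0 \<and> Qm m n q)"

lemma H_y: "1 \<le> j \<Longrightarrow> j \<le> n \<Longrightarrow> 3 \<le> n \<Longrightarrow> 1 \<le> m \<Longrightarrow> good m n (Var (Y j))"
  using G_y NZ1 unfolding good_def by blast
lemma H_yy: "1 \<le> j \<Longrightarrow> j < k \<Longrightarrow> k \<le> n \<Longrightarrow> 3 \<le> n \<Longrightarrow> 1 \<le> m \<Longrightarrow> good m n (Var (Y j) * Var (Y k))"
  using G_yy NZ2 unfolding good_def by blast
lemma H_yyy: "1 \<le> j \<Longrightarrow> j < k \<Longrightarrow> k < l \<Longrightarrow> l \<le> n \<Longrightarrow> good m n (Var (Y j) * Var (Y k) * Var (Y l))"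
  using G_yyy NZ3 unfolding good_def by blast
lemma H_x: "1 \<le> j \<Longrightarrow> j \<le> m \<Longrightarrow> 3 \<le> m \<Longrightarrow> 1 \<le> n \<Longrightarrow> good m n (Var (X j))"
  using G_x NZ1 unfolding good_def by blast
lemma H_xx: "1 \<le> j \<Longrightarrow> j < k \<Longrightarrow> k \<le> m \<Longrightarrow> 3 \<le> m \<Longrightarrow> 1 \<le> n \<Longrightarrow> good m n (Var (X j) * Var (X k))"
  using G_xx NZ2 unfolding good_def by blast
lemma H_xxx: "1 \<le> j \<Longrightarrow> j < k \<Longrightarrow> k < l \<Longrightarrow> l \<le> m \<Longrightarrow> good m n (Var (X j) * Var (X k) * Var (X l))"
  using G_xxx NZ3 unfolding good_def by blast
lemma H_yyx: "1 \<le> i \<Longrightarrow> i \<le> m \<Longrightarrow> 1 \<le> j \<Longrightarrow> j < k \<Longrightarrow> k \<le> n \<Longrightarrow>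
   good m n (Var (Y j) * Var (Y k) * Var (X i) - Var (Y j) - Var (Y k))"
  using G_yyx[of i m j k n] NZxxy[of "Y j" "Y k" "X i"] unfolding good_def by simp
lemma H_xxy: "1 \<le> i \<Longrightarrow> i < k \<Longrightarrow> k \<le> m \<Longrightarrow> 1 \<le> j \<Longrightarrow> j \<le> n \<Longrightarrow>
   good m n (Var (X i) * Var (X k) * Var (Y j) - Var (X i) - Var (X k))"
  using G_xxy[of i k m j n] NZxxy[of "X i" "X k" "Y j"] unfolding good_def by simp
lemma H_xpx: "1 \<le> i \<Longrightarrow> i < k \<Longrightarrow> k \<le> m \<Longrightarrow> 2 \<le> n \<Longrightarrow> good m n (Var (X i) + Var (X k))"
  using G_xpx[of i k m n] NZsum[of "X i" "X k"] unfolding good_def by simp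
lemma H_ypy: "1 \<le> i \<Longrightarrow> i < k \<Longrightarrow> k \<le> n \<Longrightarrow> 2 \<le> m \<Longrightarrow> good m n (Var (Y i) + Var (Y k))"
  using G_ypy[of i k n m] NZsum[of "Y i" "Y k"] unfolding good_def by simp
lemma H_xy: "1 \<le> i \<Longrightarrow> i \<le> m \<Longrightarrow> 1 \<le> j \<Longrightarrow> j \<le> n \<Longrightarrow> 2 \<le> m \<Longrightarrow> 2 \<le> n \<Longrightarrow> good m n (Var (X i) * Var (Y j))"
  using G_xy NZ2 unfolding good_def by blast

lemma listed_good: assumes "1 \<le> m" "1 \<le> n" shows "listed_minors m n \<subseteq> {q. good m n q}"
  unfolding listed_minors_def
  apply (intro subsetI CollectI)
  apply (insert assms)
  apply (simp only: Un_iff mem_Collect_eq empty_iff simp_thms split: if_split_asm)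
  apply safe
  apply (auto simp: assms intro!: H_y H_yy H_yyy H_x H_xx H_xxx H_yyx H_xxy H_xpx H_ypy H_xy)
  done


theorem lemma4p6:
  fixes m n :: nat
  assumes "m \<ge> 1" and "n \<ge> 1"
  shows "{p. p \<noteq> 0 \<and> (p \<in> three_minors (laplacian_Kmn m n) \<or> - p \<in> three_minors (laplacian_Kmn m n))}
         = listed_minors m n \<union> uminus ` listed_minors m n"
proof (rule equalityI; rule subsetI)
  fix p assume "p \<in> {p. p \<noteq> 0 \<and> (p \<in> three_minors (laplacian_Kmn m n) \<or> - p \<in> three_minors (laplacian_Kmn m n))}"
  then have p0: "p \<noteq> 0" and pm: "p \<in> three_minors (laplacian_Kmn m n) \<or> - p \<in> three_minors (laplacian_Kmn m n)" by auto
  from pm obtain x where x: "x \<in> three_minors (laplacian_Kmn m n)" "x = p \<or> x = - p" by blast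
  then obtain a b c d e f where h: "a < b" "b < c" "c < m + n" "d < e" "e < f" "f < m + n" "x = D3 (ent m) a b c d e f"
    unfolding TM_char by blast
  have "x \<noteq> 0" using x(2) p0 by auto
  then have "x \<in> SS m n" using core[OF h(1-6)] h(7) by simp
  then have "p \<in> SS m n" using x(2) S_neg[of x m n] by auto
  then show "p \<in> listed_minors m n \<union> uminus ` listed_minors m n" unfolding SS_def .
next
  fix p assume "p \<in> listed_minors m n \<union> uminus ` listed_minors m n"
  then consider "p \<in> listed_minors m n" | q where "q \<in> listed_minors m n" "p = - q" by blast
  then have "p \<noteq> 0 \<and> Qm m n p"
  proof cases
    case 1 then show ?thesis using listed_good[OF assms] unfolding good_def by blast
  next
    case 2 then have "q \<noteq> 0 \<and> Qm m n q" using listed_good[OF assms] unfolding good_def by blast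
    then show ?thesis using 2 Q_neg by simp
  qed
  then show "p \<in> {p. p \<noteq> 0 \<and> (p \<in> three_minors (laplacian_Kmn m n) \<or> - p \<in> three_minors (laplacian_Kmn m n))}"
    unfolding Qm_def by simp
qed

end
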